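(* For a Frobenius array $\mu \in \mathcal{F}(\beta)$, the array $\gamma$ constructed from $\mu$ is an $S_{\beta}$-partition, i.e., the entries of $\gamma$ in each row are (weakly) decreasing and the entries in each column are (weakly) decreasing. In addition, the entries in each column of $\gamma$ that came from the positive blocks of $\mu$ are strictly decreasing.
   Context: Let $\beta=(b_1,\ldots,b_m)$ be a composition of $d$ and set $r_i=b_1+\cdots+b_i$ ($r_0=0$). The poset $S_\beta$ is $\bigcup_{l=1}^{m}\{(i,j): l\le i\le l+1,\ r_{l-1}+1\le j\le r_l\}$ with $(i_1,j_1)\le(i_2,j_2)$ iff $i_1\le i_2$ and $j_1\le j_2$; it carries the natural labeling $\nu(i,j)=r_{l-1}+j+(i-l)b_l$ (where $r_{l-1}+1\le j\le r_l$), so an $S_\beta$-partition is an order-reversing map $S_\beta\to\mathbb{N}$ (nonnegative integers). A Frobenius symbol with $d$ columns is a two-rowed array $\left(\begin{smallmatrix}x_1&\cdots&x_d\\ y_1&\cdots&y_d\end{smallmatrix}\right)$ with $x_1>\cdots>x_d\ge0$, $y_1>\cdots>y_d\ge0$; a column is positive if $x_i-y_i\ge1$ and negative if $x_i-y_i\le0$; parity blocks are maximal sets of contiguous columns of the same parity. Subtracting $d-1,d-2,\ldots,0$ from the entries of columns $1,\ldots,d$ in each row gives a Frobenius array $\mu$ (rows weakly decreasing, column parities unchanged). $\mathcal{F}(\beta)$ is the set of Frobenius arrays with $d$ columns and $m$ parity blocks $B_1,\ldots,B_m$, where $B_m$ is positive and $B_i$ has $b_i$ columns. From $\mu\in\mathcal{F}(\beta)$,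 $\gamma$ is built as follows: interchange the top and bottom entries in every column of each negative block to get $\hat\mu$; then place the $(i,j)$-th entry $\hat\mu_{i,j}$ ($i\in\{1,2\}$) at position $(i+l,j)$ of $S_\beta$, where $r_l<j\le r_{l+1}$. *)

theory Defs
  imports Main
begin

definition composition :: "nat list \<Rightarrow> bool" where
  "composition \<beta> \<longleftrightarrow> (\<forall>b\<in>set \<beta>. 0 < b)"

definition rr :: "nat list \<Rightarrow> nat \<Rightarrow> nat" where
  "rr \<beta> l = sum_list (take l \<beta>)"

definition colblock :: "nat list \<Rightarrow> nat \<Rightarrow> nat set" where
  "colblock \<beta> l = {rr \<beta> (l - 1) + 1 .. rr \<beta> l}"

definition S_poset :: "nat list \<Rightarrow> (nat \<times> nat) set" where
  "S_poset \<beta> = (\<Union>l\<in>{1..length \<beta>}. {(i, j). l \<le> i \<and> i \<le> l + 1 \<and> j \<in> colblock \<beta> l})"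

definition S_le :: "nat \<times> nat \<Rightarrow> nat \<times> nat \<Rightarrow> bool" where
  "S_le p q \<longleftrightarrow> fst p \<le> fst q \<and> snd p \<le> snd q"

definition S_partition :: "nat list \<Rightarrow> (nat \<times> nat \<Rightarrow> nat) \<Rightarrow> bool" where
  "S_partition \<beta> \<gamma> \<longleftrightarrow>
     (\<forall>p\<in>S_poset \<beta>. \<forall>q\<in>S_poset \<beta>. S_le p q \<longrightarrow> \<gamma> q \<le> \<gamma> p)"

text \<open>A Frobenius array with d columns: entries mu i j, i in {1,2}, j in {1..d},
  nonnegative integers, rows weakly decreasing.\<close>
definition frobenius_array :: "nat \<Rightarrow> (nat \<Rightarrow> nat \<Rightarrow> nat) \<Rightarrow> bool" where
  "frobenius_array d \<mu> \<longleftrightarrow>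
     (\<forall>i\<in>{1,2}. \<forall>j j'. 1 \<le> j \<and> j \<le> j' \<and> j' \<le> d \<longrightarrow> \<mu> i j' \<le> \<mu> i j)"

definition positive_col :: "(nat \<Rightarrow> nat \<Rightarrow> nat) \<Rightarrow> nat \<Rightarrow> bool" where
  "positive_col \<mu> j \<longleftrightarrow> int (\<mu> 1 j) - int (\<mu> 2 j) \<ge> 1"

text \<open>F(beta): the parity blocks are exactly the column blocks given by beta
  (each block has constant parity, consecutive blocks differ in parity, i.e. the
  blocks are maximal), and the last block B_m is positive.\<close>
definition in_F :: "nat list \<Rightarrow> (nat \<Rightarrow> nat \<Rightarrow> nat) \<Rightarrow> bool" where
  "in_F \<beta> \<mu> \<longleftrightarrow>
     frobenius_array (sum_list \<beta>) \<mu> \<and>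
     (\<forall>l\<in>{1..length \<beta>}. \<forall>j\<in>colblock \<beta> l. \<forall>j'\<in>colblock \<beta> l.
         positive_col \<mu> j \<longleftrightarrow> positive_col \<mu> j') \<and>
     (\<forall>l. 1 \<le> l \<and> l < length \<beta> \<longrightarrow>
         positive_col \<mu> (rr \<beta> l) \<noteq> positive_col \<mu> (rr \<beta> l + 1)) \<and>
     (\<forall>j\<in>colblock \<beta> (length \<beta>). positive_col \<mu> j)"

definition blk :: "nat list \<Rightarrow> nat \<Rightarrow> nat" where
  "blk \<beta> j = (LEAST l. j \<le> rr \<beta> l)"

definition mu_hat :: "(nat \<Rightarrow> nat \<Rightarrow> nat) \<Rightarrow> nat \<Rightarrow> nat \<Rightarrow> nat" where
  "mu_hat \<mu> i j = (if positive_col \<mu> j then \<mu> i j else \<mu> (3 - i) j)"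

definition gamma :: "nat list \<Rightarrow> (nat \<Rightarrow> nat \<Rightarrow> nat) \<Rightarrow> nat \<times> nat \<Rightarrow> nat" where
  "gamma \<beta> \<mu> p = (let a = fst p; j = snd p; l = blk \<beta> j - 1 in
      if a = 1 + l then mu_hat \<mu> 1 j else if a = 2 + l then mu_hat \<mu> 2 j else 0)"

end

theory Submission
  imports Defs
begin

lemma rr_mono: "l \<le> l' \<Longrightarrow> rr \<beta> l \<le> rr \<beta> l'"
proof -
  assume "l \<le> l'"
  then obtain k where "l' = l + k" using le_Suc_ex by blast
  then show ?thesis unfolding rr_def by (simp add: take_add)
qed

lemma rr_le: "rr \<beta> l \<le> sum_list \<beta>"
proof -
  have "sum_list \<beta> = sum_list (take l \<beta>) + sum_list (drop l \<beta>)"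
    by (metis append_take_drop_id sum_list_append)
  then show ?thesis unfolding rr_def by simp
qed

lemma blk_eq:
  assumes "1 \<le> l" "j \<in> colblock \<beta> l"
  shows "blk \<beta> j = l"
  unfolding blk_def
proof (rule Least_equality)
  show "j \<le> rr \<beta> l" using assms(2) by (simp add: colblock_def)
next
  fix y assume "j \<le> rr \<beta> y"
  show "l \<le> y"
  proof (rule ccontr)
    assume "\<not> l \<le> y"
    then have "rr \<beta> y \<le> rr \<beta> (l - 1)" by (intro rr_mono) simp
    with assms(2) \<open>j \<le> rr \<beta> y\<close> show False by (simp add: colblock_def)
  qed
qed

lemma cell:
  assumes "p \<in> S_poset \<beta>"
  obtains l where "1 \<le> l" "l \<le> length \<beta>" "snd p \<in> colblock \<beta> l"
    "fst p = l \<or> fst p = l + 1" "blk \<beta> (snd p) = l"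
    "gamma \<beta> \<mu> p = (if fst p = l then mu_hat \<mu> 1 (snd p) else mu_hat \<mu> 2 (snd p))"
proof -
  obtain l where l: "1 \<le> l" "l \<le> length \<beta>" "snd p \<in> colblock \<beta> l" "fst p = l \<or> fst p = l + 1"
  proof -
    from assms obtain l where "l \<in> {1..length \<beta>}" "fst p \<ge> l" "fst p \<le> l + 1" "snd p \<in> colblock \<beta> l"
      unfolding S_poset_def by (auto simp: case_prod_beta)
    then show ?thesis using that by (metis atLeastAtMost_iff le_Suc_eq Suc_eq_plus1 le_antisym)
  qed
  have b: "blk \<beta> (snd p) = l" using blk_eq l by blast
  have "gamma \<beta> \<mu> p = (if fst p = l then mu_hat \<mu> 1 (snd p) else mu_hat \<mu> 2 (snd p))"
    using l(1,4) b unfolding gamma_def Let_def by auto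
  with l b that show ?thesis by blast
qed

lemma col_range: "j \<in> colblock \<beta> l \<Longrightarrow> 1 \<le> j \<and> j \<le> sum_list \<beta>"
  using rr_le[of \<beta> l] by (auto simp: colblock_def)

theorem lemma4p2:
  fixes \<beta> :: "nat list" and \<mu> :: "nat \<Rightarrow> nat \<Rightarrow> nat"
  assumes "composition \<beta>"
    and "in_F \<beta> \<mu>"
  shows "S_partition \<beta> (gamma \<beta> \<mu>) \<and>
         (\<forall>p\<in>S_poset \<beta>. \<forall>q\<in>S_poset \<beta>.
            snd p = snd q \<and> fst p < fst q \<and> positive_col \<mu> (snd p)
            \<longrightarrow> gamma \<beta> \<mu> q < gamma \<beta> \<mu> p)"
proof -
  define d where "d = sum_list \<beta>"
  have fa: "frobenius_array d \<mu>" and sg: "\<forall>l\<in>{1..length \<beta>}. \<forall>j\<in>colblock \<beta> l. \<forall>j'\<in>colblock \<beta> l.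
         positive_col \<mu> j \<longleftrightarrow> positive_col \<mu> j'"
    and alt: "\<forall>l. 1 \<le> l \<and> l < length \<beta> \<longrightarrow>
         positive_col \<mu> (rr \<beta> l) \<noteq> positive_col \<mu> (rr \<beta> l + 1)"
    using assms(2) unfolding in_F_def d_def by blast+
  have dec1: "\<mu> 1 j' \<le> \<mu> 1 j" and dec2: "\<mu> 2 j' \<le> \<mu> 2 j"
    if "1 \<le> j" "j \<le> j'" "j' \<le> d" for j j'
    using fa that unfolding frobenius_array_def by (meson insertCI)+
  define mx where "mx j = mu_hat \<mu> 1 j" for j
  define mn where "mn j = mu_hat \<mu> 2 j" for j
  have mxmn: "mn j \<le> mx j" for j
    unfolding mx_def mn_def mu_hat_def positive_col_def by auto
  have mxdec: "mx j' \<le> mx j" and mndec: "mn j' \<le> mn j"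
    if "1 \<le> j" "j \<le> j'" "j' \<le> d" "positive_col \<mu> j = positive_col \<mu> j'" for j j'
    using that dec1[OF that(1-3)] dec2[OF that(1-3)]
    unfolding mx_def mn_def mu_hat_def by auto
  have mxall: "mx j' \<le> mx j" if "1 \<le> j" "j \<le> j'" "j' \<le> d" for j j'
    using that dec1[OF that(1-3)] dec2[OF that(1-3)]
    unfolding mx_def mn_def mu_hat_def positive_col_def by auto
  have cross: "mx j' \<le> mn j" if "1 \<le> j" "j \<le> j'" "j' \<le> d" "positive_col \<mu> j \<noteq> positive_col \<mu> j'" for j j'
    using that dec1[OF that(1-3)] dec2[OF that(1-3)]
    unfolding mx_def mn_def mu_hat_def positive_col_def by auto
  have diffblk: "mx j' \<le> mn j" if "1 \<le> l" "l < l'" "l' \<le> length \<beta>"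
    "j \<in> colblock \<beta> l" "j' \<in> colblock \<beta> l'" for l l' j j'
  proof -
    define k where "k = rr \<beta> l + 1"
    have jr: "j \<le> rr \<beta> l" "1 \<le> j" using that(4) by (auto simp: colblock_def)
    have "rr \<beta> l \<le> rr \<beta> (l' - 1)" using that by (intro rr_mono) simp
    hence kj': "k \<le> j'" using that(5) by (auto simp: colblock_def k_def)
    have j'd: "j' \<le> d" using col_range[OF that(5)] d_def by simp
    have rin: "rr \<beta> l \<in> colblock \<beta> l" using that(4) by (auto simp: colblock_def)
    have "positive_col \<mu> (rr \<beta> l) = positive_col \<mu> j"
    proof -
      have "l \<in> {1..length \<beta>}" using that(1,2,3) by simp
      then show ?thesis using sg that(4) rin by blast
    qed
    moreover have "positive_col \<mu> (rr \<beta> l) \<noteq> positive_col \<mu> k"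
      using alt that(1,2,3) unfolding k_def by (meson order.strict_trans2)
    ultimately have "mx k \<le> mn j" using cross[of j k] jr kj' j'd k_def by auto
    moreover have "mx j' \<le> mx k" using mxall[of k j'] kj' j'd k_def by auto
    ultimately show ?thesis by simp
  qed
  have part: "S_partition \<beta> (gamma \<beta> \<mu>)"
    unfolding S_partition_def
  proof (intro ballI impI)
    fix p q assume p: "p \<in> S_poset \<beta>" and q: "q \<in> S_poset \<beta>" and le: "S_le p q"
    obtain l where l: "1 \<le> l" "l \<le> length \<beta>" "snd p \<in> colblock \<beta> l"
      "fst p = l \<or> fst p = l + 1" "blk \<beta> (snd p) = l"
      "gamma \<beta> \<mu> p = (if fst p = l then mx (snd p) else mn (snd p))"
    proof -
      obtain l0 where "1 \<le> l0" "l0 \<le> length \<beta>" "snd p \<in> colblock \<beta> l0"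
        "fst p = l0 \<or> fst p = l0 + 1" "blk \<beta> (snd p) = l0"
        "gamma \<beta> \<mu> p = (if fst p = l0 then mu_hat \<mu> 1 (snd p) else mu_hat \<mu> 2 (snd p))"
        by (rule cell[OF p])
      note h = this
      show ?thesis by (rule that[of l0]) (use h in \<open>simp_all add: mx_def mn_def\<close>)
    qed
    obtain l' where l': "1 \<le> l'" "l' \<le> length \<beta>" "snd q \<in> colblock \<beta> l'"
      "fst q = l' \<or> fst q = l' + 1" "blk \<beta> (snd q) = l'"
      "gamma \<beta> \<mu> q = (if fst q = l' then mx (snd q) else mn (snd q))"
    proof -
      obtain l0 where "1 \<le> l0" "l0 \<le> length \<beta>" "snd q \<in> colblock \<beta> l0"
        "fst q = l0 \<or> fst q = l0 + 1" "blk \<beta> (snd q) = l0"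
        "gamma \<beta> \<mu> q = (if fst q = l0 then mu_hat \<mu> 1 (snd q) else mu_hat \<mu> 2 (snd q))"
        by (rule cell[OF q])
      note h = this
      show ?thesis by (rule that[of l0]) (use h in \<open>simp_all add: mx_def mn_def\<close>)
    qed
    have jj: "snd p \<le> snd q" "fst p \<le> fst q" using le by (auto simp: S_le_def)
    have "snd p \<le> rr \<beta> l'" using jj(1) l'(3) by (auto simp: colblock_def)
    then have "blk \<beta> (snd p) \<le> l'" unfolding blk_def by (rule Least_le)
    then have ll: "l \<le> l'" using l(5) by simp
    have r: "1 \<le> snd p" "snd q \<le> d" using col_range l(3) l'(3) d_def by auto
    show "gamma \<beta> \<mu> q \<le> gamma \<beta> \<mu> p"
    proof (cases "l = l'")
      case True
      have sgn: "positive_col \<mu> (snd p) = positive_col \<mu> (snd q)"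
      proof -
        have "l \<in> {1..length \<beta>}" using l(1,2) by simp
        then show ?thesis using sg l(3) l'(3) True by blast
      qed
      have "mx (snd q) \<le> mx (snd p)" "mn (snd q) \<le> mn (snd p)"
        using mxdec[OF r(1) jj(1) r(2) sgn] mndec[OF r(1) jj(1) r(2) sgn] by simp_all
      note m = this mxmn[of "snd q"] mxmn[of "snd p"]
      show ?thesis
      proof (cases "fst p = l")
        case True
        then show ?thesis using l(6) l'(6) m by (simp; meson le_trans)
      next
        case False
        then have "fst p = l + 1" using l(4) by simp
        then have "fst q \<noteq> l'" using jj(2) \<open>l = l'\<close> by simp
        then show ?thesis using False l(6) l'(6) m by simp
      qed
    next
      case False
      then have "l < l'" using ll by simp
      then have "mx (snd q) \<le> mn (snd p)" using diffblk[OF l(1) _ l'(2) l(3) l'(3)] by blast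
      moreover have "gamma \<beta> \<mu> q \<le> mx (snd q)" using l'(6) mxmn[of "snd q"] by simp
      moreover have "mn (snd p) \<le> gamma \<beta> \<mu> p" using l(6) mxmn[of "snd p"] by simp
      ultimately show ?thesis by linarith
    qed
  qed
  have strict: "\<forall>p\<in>S_poset \<beta>. \<forall>q\<in>S_poset \<beta>.
            snd p = snd q \<and> fst p < fst q \<and> positive_col \<mu> (snd p)
            \<longrightarrow> gamma \<beta> \<mu> q < gamma \<beta> \<mu> p"
  proof (intro ballI impI)
    fix p q assume p: "p \<in> S_poset \<beta>" and q: "q \<in> S_poset \<beta>" and
      h: "snd p = snd q \<and> fst p < fst q \<and> positive_col \<mu> (snd p)"
    obtain l where l: "fst p = l \<or> fst p = l + 1" "blk \<beta> (snd p) = l"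
      "gamma \<beta> \<mu> p = (if fst p = l then mu_hat \<mu> 1 (snd p) else mu_hat \<mu> 2 (snd p))"
    proof -
      obtain l0 where "1 \<le> l0" "l0 \<le> length \<beta>" "snd p \<in> colblock \<beta> l0"
        "fst p = l0 \<or> fst p = l0 + 1" "blk \<beta> (snd p) = l0"
        "gamma \<beta> \<mu> p = (if fst p = l0 then mu_hat \<mu> 1 (snd p) else mu_hat \<mu> 2 (snd p))"
        by (rule cell[OF p])
      note h = this
      show ?thesis by (rule that[of l0]) (use h in simp_all)
    qed
    obtain l' where l': "fst q = l' \<or> fst q = l' + 1" "blk \<beta> (snd q) = l'"
      "gamma \<beta> \<mu> q = (if fst q = l' then mu_hat \<mu> 1 (snd q) else mu_hat \<mu> 2 (snd q))"
    proof -
      obtain l0 where "1 \<le> l0" "l0 \<le> length \<beta>" "snd q \<in> colblock \<beta> l0"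
        "fst q = l0 \<or> fst q = l0 + 1" "blk \<beta> (snd q) = l0"
        "gamma \<beta> \<mu> q = (if fst q = l0 then mu_hat \<mu> 1 (snd q) else mu_hat \<mu> 2 (snd q))"
        by (rule cell[OF q])
      note h = this
      show ?thesis by (rule that[of l0]) (use h in simp_all)
    qed
    have "l = l'" using l(2) l'(2) h by simp
    then have "fst p = l" "fst q = l + 1" using l(1) l'(1) h by auto
    then show "gamma \<beta> \<mu> q < gamma \<beta> \<mu> p"
      using l(3) l'(3) h \<open>l = l'\<close> unfolding mu_hat_def positive_col_def by auto
  qed
  show ?thesis using part strict by blast
qed

end
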